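(* Let $p>1$ and let $\varphi:\mathbb{R}^n\to\mathbb{R}\cup\{+\infty\}$ be proper and lower semicontinuous. The following are equivalent: (a) $\varphi$ is high-order prox-bounded with order $p$; (b) there exists $\ell>0$ such that $\varphi(\cdot)+\ell\|\cdot\|^p$ is bounded from below on $\mathbb{R}^n$; (c) $\liminf_{\|x\|\to\infty}\frac{\varphi(x)}{\|x\|^p}>-\infty$.
   Context: For $p>1$, $\gamma>0$, the high-order Moreau envelope of $\varphi$ is $\varphi^p_\gamma(x):=\inf_{y\in\mathbb{R}^n}\big(\varphi(y)+\frac{1}{p\gamma}\|x-y\|^p\big)$. The function $\varphi$ is called high-order prox-bounded with order $p$ if there exist $\gamma>0$ and $x\in\mathbb{R}^n$ with $\varphi^p_\gamma(x)>-\infty$. $\|\cdot\|$ is the Euclidean norm. *)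

theory Defs
  imports "HOL-Analysis.Analysis"
begin

definition proper_fun :: "('a \<Rightarrow> ereal) \<Rightarrow> bool" where
  "proper_fun \<phi> \<longleftrightarrow> (\<forall>x. \<phi> x \<noteq> -\<infinity>) \<and> (\<exists>x. \<phi> x < \<infinity>)"

definition lsc_fun :: "('a::topological_space \<Rightarrow> ereal) \<Rightarrow> bool" where
  "lsc_fun \<phi> \<longleftrightarrow> (\<forall>x. \<phi> x \<le> Liminf (at x) \<phi>)"

definition moreau_env :: "real \<Rightarrow> real \<Rightarrow> ('a::real_normed_vector \<Rightarrow> ereal) \<Rightarrow> 'a \<Rightarrow> ereal" where
  "moreau_env p \<gamma> \<phi> x = (INF y. \<phi> y + ereal (1 / (p * \<gamma>) * norm (x - y) powr p))"

definition ho_prox_bounded :: "real \<Rightarrow> ('a::real_normed_vector \<Rightarrow> ereal) \<Rightarrow> bool" where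
  "ho_prox_bounded p \<phi> \<longleftrightarrow> (\<exists>\<gamma>>0. \<exists>x. moreau_env p \<gamma> \<phi> x > -\<infinity>)"

end

theory Submission
  imports Defs
begin
lemma lsc_open:
  fixes \<phi> :: "'a::topological_space \<Rightarrow> ereal"
  assumes "lsc_fun \<phi>"
  shows "open {y. \<phi> y > t}"
proof (subst open_subopen, intro ballI)
  fix x assume x: "x \<in> {y. \<phi> y > t}"
  have "t < Liminf (at x) \<phi>" using x assms unfolding lsc_fun_def by (auto intro: less_le_trans)
  hence "eventually (\<lambda>y. \<phi> y > t) (at x)" by (rule less_LiminfD)
  hence "eventually (\<lambda>y. \<phi> y > t) (nhds x)" using x unfolding eventually_at_filter by (auto elim!: eventually_mono)
  then obtain U where "open U" "x \<in> U" "\<forall>y\<in>U. \<phi> y > t" unfolding eventually_nhds by blast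
  thus "\<exists>T. open T \<and> x \<in> T \<and> T \<subseteq> {y. \<phi> y > t}" by auto
qed

lemma lsc_bdd:
  fixes \<phi> :: "'a::topological_space \<Rightarrow> ereal"
  assumes "lsc_fun \<phi>" "\<forall>x. \<phi> x \<noteq> -\<infinity>" "compact S"
  shows "\<exists>c::real. \<forall>x\<in>S. \<phi> x \<ge> ereal c"
proof -
  have cov: "S \<subseteq> (\<Union>k\<in>(UNIV::nat set). {y. \<phi> y > ereal (- real k)})"
  proof
    fix x assume "x \<in> S"
    show "x \<in> (\<Union>k\<in>(UNIV::nat set). {y. \<phi> y > ereal (- real k)})"
    proof (cases "\<phi> x")
      case (real r)
      obtain k::nat where "real k > - r" using reals_Archimedean2 by blast
      hence "ereal (- real k) < \<phi> x" using real by simp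
      thus ?thesis by blast
    next
      case PInf thus ?thesis by auto
    next
      case MInf thus ?thesis using assms(2) by auto
    qed
  qed
  obtain C where C: "finite C" "S \<subseteq> (\<Union>k\<in>C. {y. \<phi> y > ereal (- real k)})"
    using compactE_image[OF assms(3) _ cov] lsc_open[OF assms(1)] by metis
  define K where "K = Max (insert 0 C)"
  have "\<forall>x\<in>S. \<phi> x \<ge> ereal (- real K)"
  proof
    fix x assume "x \<in> S"
    then obtain k where k: "k \<in> C" "\<phi> x > ereal (- real k)" using C by auto
    have "k \<le> K" unfolding K_def using k C by auto
    hence "ereal (- real K) \<le> ereal (- real k)" by simp
    thus "\<phi> x \<ge> ereal (- real K)" using k by (meson less_imp_le order_trans)
  qed
  thus ?thesis by blast
qed

lemma powr_tri:
  fixes x y :: "'a::real_normed_vector" assumes "p > 0"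
  shows "norm (x - y) powr p \<le> 2 powr p * (norm x powr p + norm y powr p)"
proof -
  define m where "m = max (norm x) (norm y)"
  have "norm (x - y) \<le> 2 * m" unfolding m_def using norm_triangle_ineq4[of x y] by linarith
  hence "norm (x - y) powr p \<le> (2 * m) powr p" using assms by (intro powr_mono2) auto
  also have "\<dots> = 2 powr p * m powr p" unfolding m_def by (simp add: powr_mult)
  also have "m powr p \<le> norm x powr p + norm y powr p" unfolding m_def by (auto simp: max_def)
  hence "2 powr p * m powr p \<le> 2 powr p * (norm x powr p + norm y powr p)" by simp
  finally show ?thesis .
qed

lemma A_imp_B:
  fixes \<phi> :: "'a::real_normed_vector \<Rightarrow> ereal"
  assumes p: "p > 1" and "ho_prox_bounded p \<phi>"
  shows "\<exists>l>0. \<exists>c::real. \<forall>x. \<phi> x + ereal (l * norm x powr p) \<ge> ereal c"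
proof -
  obtain \<gamma> x0 where g: "\<gamma> > 0" and mx: "moreau_env p \<gamma> \<phi> x0 > -\<infinity>"
    using assms unfolding ho_prox_bounded_def by blast
  obtain c0 where c0: "ereal c0 \<le> moreau_env p \<gamma> \<phi> x0"
  proof (cases "moreau_env p \<gamma> \<phi> x0")
    case (real r) thus ?thesis using that by auto
  next
    case PInf thus ?thesis using that by auto
  next
    case MInf thus ?thesis using mx by auto
  qed
  define k where "k = 1 / (p * \<gamma>)"
  have k: "k > 0" unfolding k_def using p g by auto
  define l where "l = k * 2 powr p"
  define c where "c = c0 - k * 2 powr p * norm x0 powr p"
  have "\<forall>y. \<phi> y + ereal (l * norm y powr p) \<ge> ereal c"
  proof
    fix y
    have le: "ereal c0 \<le> \<phi> y + ereal (k * norm (x0 - y) powr p)"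
      using c0 unfolding moreau_env_def k_def by (meson INF_lower UNIV_I order_trans)
    have tri: "k * norm (x0 - y) powr p \<le> k * (2 powr p * (norm x0 powr p + norm y powr p))"
      using powr_tri[of p x0 y] p k by (intro mult_left_mono) auto
    show "\<phi> y + ereal (l * norm y powr p) \<ge> ereal c"
    proof (cases "\<phi> y")
      case (real r)
      hence "c0 \<le> r + k * norm (x0 - y) powr p" using le by simp
      hence "c \<le> r + l * norm y powr p" using tri unfolding c_def l_def by (simp add: algebra_simps)
      thus ?thesis using real by simp
    qed (use le in auto)
  qed
  moreover have "l > 0" unfolding l_def using k by simp
  ultimately show ?thesis by blast
qed

lemma B_imp_A:
  fixes \<phi> :: "'a::real_normed_vector \<Rightarrow> ereal"
  assumes p: "p > 1" and "\<exists>l>0. \<exists>c::real. \<forall>x. \<phi> x + ereal (l * norm x powr p) \<ge> ereal c"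
  shows "ho_prox_bounded p \<phi>"
proof -
  obtain l c where l: "l > 0" and c: "\<forall>x. \<phi> x + ereal (l * norm x powr p) \<ge> ereal c"
    using assms by blast
  define \<gamma> where "\<gamma> = 1 / (p * l)"
  have g: "\<gamma> > 0" using l p unfolding \<gamma>_def by auto
  have e: "1 / (p * \<gamma>) = l" unfolding \<gamma>_def using l p by simp
  have "ereal c \<le> moreau_env p \<gamma> \<phi> 0"
    unfolding moreau_env_def e using c by (auto intro!: INF_greatest)
  hence "moreau_env p \<gamma> \<phi> 0 > -\<infinity>" using less_le_trans[of "-\<infinity>" "ereal _"] by simp
  thus ?thesis unfolding ho_prox_bounded_def using g by blast
qed

lemma B_imp_C:
  fixes \<phi> :: "'a::real_normed_vector \<Rightarrow> ereal"
  assumes p: "p > 1" and "\<exists>l>0. \<exists>c::real. \<forall>x. \<phi> x + ereal (l * norm x powr p) \<ge> ereal c"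
  shows "Liminf at_infinity (\<lambda>x. \<phi> x / ereal (norm x powr p)) > -\<infinity>"
proof -
  obtain l c where l: "l > 0" and c: "\<forall>x. \<phi> x + ereal (l * norm x powr p) \<ge> ereal c"
    using assms by blast
  have "eventually (\<lambda>x. ereal (- \<bar>c\<bar> - l) \<le> \<phi> x / ereal (norm x powr p)) at_infinity"
    unfolding eventually_at_infinity
  proof (intro exI allI impI)
    fix x :: 'a assume x: "1 \<le> norm x"
    define d where "d = norm x powr p"
    have d: "d \<ge> 1" unfolding d_def using x p by (simp add: ge_one_powr_ge_zero)
    have cx: "\<phi> x + ereal (l * d) \<ge> ereal c" using c unfolding d_def by blast
    show "ereal (- \<bar>c\<bar> - l) \<le> \<phi> x / ereal (norm x powr p)"
    proof (cases "\<phi> x")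
      case (real r)
      have "c \<le> r + l * d" using cx real by simp
      moreover have "- \<bar>c\<bar> * d \<le> - \<bar>c\<bar>" using d by (simp add: mult_le_cancel_left1)
      ultimately have "(- \<bar>c\<bar> - l) * d \<le> r" by (simp add: algebra_simps)
      hence "- \<bar>c\<bar> - l \<le> r / d" using d by (simp add: pos_le_divide_eq)
      moreover have "\<phi> x / ereal (norm x powr p) = ereal (r / d)"
        unfolding d_def[symmetric] using real d by simp
      ultimately show ?thesis by simp
    next
      case PInf thus ?thesis using d unfolding d_def by simp
    next
      case MInf thus ?thesis using cx by simp
    qed
  qed
  hence "ereal (- \<bar>c\<bar> - l) \<le> Liminf at_infinity (\<lambda>x. \<phi> x / ereal (norm x powr p))"
    by (rule Liminf_bounded)
  thus ?thesis using less_le_trans[of "-\<infinity>" "ereal _"] by simp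
qed

lemma C_imp_B:
  fixes \<phi> :: "'a::{real_normed_vector,heine_borel} \<Rightarrow> ereal"
  assumes p: "p > 1" and pr: "proper_fun \<phi>" and lsc: "lsc_fun \<phi>"
    and L: "Liminf at_infinity (\<lambda>x. \<phi> x / ereal (norm x powr p)) > -\<infinity>"
  shows "\<exists>l>0. \<exists>c::real. \<forall>x. \<phi> x + ereal (l * norm x powr p) \<ge> ereal c"
proof -
  obtain m :: real where m: "ereal m < Liminf at_infinity (\<lambda>x. \<phi> x / ereal (norm x powr p))"
  proof (cases "Liminf at_infinity (\<lambda>x. \<phi> x / ereal (norm x powr p))")
    case (real r) thus ?thesis using that[of "r - 1"] by auto
  next
    case PInf thus ?thesis using that[of 0] by auto
  next
    case MInf thus ?thesis using L by auto
  qed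
  have "eventually (\<lambda>x. ereal m < \<phi> x / ereal (norm x powr p)) at_infinity"
    using less_LiminfD[OF m] .
  then obtain b where b: "\<And>x. b \<le> norm x \<Longrightarrow> ereal m < \<phi> x / ereal (norm x powr p)"
    unfolding eventually_at_infinity by blast
  define R where "R = max b 1"
  have nm: "\<forall>x. \<phi> x \<noteq> -\<infinity>" using pr unfolding proper_fun_def by blast
  obtain c1 where c1: "\<forall>x\<in>cball 0 R. \<phi> x \<ge> ereal c1"
    using lsc_bdd[OF lsc nm compact_cball] by blast
  define l where "l = \<bar>m\<bar> + 1"
  define c where "c = min 0 c1"
  have "\<forall>x. \<phi> x + ereal (l * norm x powr p) \<ge> ereal c"
  proof
    fix x :: 'a
    define d where "d = norm x powr p"
    have d0: "d \<ge> 0" unfolding d_def by simp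
    have ld: "l * d \<ge> 0" unfolding l_def using d0 by simp
    show "\<phi> x + ereal (l * norm x powr p) \<ge> ereal c"
    proof (cases "norm x \<le> R")
      case True
      hence "\<phi> x \<ge> ereal c1" using c1 by auto
      thus ?thesis using ld unfolding d_def c_def
        by (cases "\<phi> x") (auto simp: min_def)
    next
      case False
      hence x: "norm x \<ge> b" "norm x \<ge> 1" unfolding R_def by auto
      have d: "d \<ge> 1" unfolding d_def using x p by (simp add: ge_one_powr_ge_zero)
      have q: "ereal m < \<phi> x / ereal d" using b[OF x(1)] unfolding d_def .
      show ?thesis
      proof (cases "\<phi> x")
        case (real r)
        hence "m < r / d" using q d by simp
        hence "m * d < r" using d by (simp add: pos_less_divide_eq)
        moreover have "- \<bar>m\<bar> * d \<le> m * d" using mult_right_mono[of "-\<bar>m\<bar>" m d] d0 by simp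
        ultimately have "0 \<le> r + l * d" using d0 unfolding l_def by (simp add: algebra_simps)
        thus ?thesis using real unfolding c_def d_def by (simp add: min_def)
      qed (use nm in auto)
    qed
  qed
  thus ?thesis unfolding l_def by (intro exI[of _ l]) (auto simp: l_def)
qed

theorem proposition1:
  fixes p :: real and \<phi> :: "real ^ 'n \<Rightarrow> ereal"
  assumes "p > 1" and "proper_fun \<phi>" and "lsc_fun \<phi>"
  shows "(ho_prox_bounded p \<phi> \<longleftrightarrow>
            (\<exists>l>0. \<exists>c::real. \<forall>x. \<phi> x + ereal (l * norm x powr p) \<ge> ereal c))
       \<and> (ho_prox_bounded p \<phi> \<longleftrightarrow>
            Liminf at_infinity (\<lambda>x. \<phi> x / ereal (norm x powr p)) > -\<infinity>)"
  using A_imp_B[OF assms(1)] B_imp_A[OF assms(1)] B_imp_C[OF assms(1)] C_imp_B[OF assms] by blast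

end
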